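(* Let $\Gamma$ be a simple, undirected, connected graph with $p\ge 2$ vertices and diameter $\mathrm{diam}(\Gamma)$. Then $$\gamma_{[3R]}(\Gamma)\le 3p-\frac{5\,\mathrm{diam}(\Gamma)}{3}+\frac{7}{3}.$$
   Context: The diameter is the maximum distance between two vertices. For a graph $\Gamma=(V,E)$ and $h:V\to\{0,1,2,3,4\}$, let $AN(v)=\{w\in N(v):h(w)\ge 1\}$, $AN[v]=AN(v)\cup\{v\}$ and $h(S)=\sum_{u\in S}h(u)$. $h$ is a triple Roman dominating function (3RDF) if every $v$ with $h(v)<3$ satisfies $h(AN[v])\ge|AN(v)|+3$. The triple Roman domination number $\gamma_{[3R]}(\Gamma)$ is the minimum weight $h(V)$ of a 3RDF of $\Gamma$. *)

theory Defs
  imports Complex_Main "HOL-Library.FuncSet"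
begin

definition simple_graph :: "'a set \<Rightarrow> ('a \<Rightarrow> 'a \<Rightarrow> bool) \<Rightarrow> bool" where
  "simple_graph V E \<longleftrightarrow> finite V \<and> (\<forall>u v. E u v \<longrightarrow> u \<in> V \<and> v \<in> V)
     \<and> (\<forall>u v. E u v \<longrightarrow> E v u) \<and> (\<forall>v. \<not> E v v)"

definition walk :: "'a set \<Rightarrow> ('a \<Rightarrow> 'a \<Rightarrow> bool) \<Rightarrow> 'a \<Rightarrow> 'a \<Rightarrow> nat \<Rightarrow> bool" where
  "walk V E u v n \<longleftrightarrow> (\<exists>f :: nat \<Rightarrow> 'a. f 0 = u \<and> f n = v \<and> (\<forall>i\<le>n. f i \<in> V)
      \<and> (\<forall>i<n. E (f i) (f (Suc i))))"

definition connected_graph :: "'a set \<Rightarrow> ('a \<Rightarrow> 'a \<Rightarrow> bool) \<Rightarrow> bool" where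
  "connected_graph V E \<longleftrightarrow> (\<forall>u\<in>V. \<forall>v\<in>V. \<exists>n. walk V E u v n)"

definition gdist :: "'a set \<Rightarrow> ('a \<Rightarrow> 'a \<Rightarrow> bool) \<Rightarrow> 'a \<Rightarrow> 'a \<Rightarrow> nat" where
  "gdist V E u v = (LEAST n. walk V E u v n)"

definition diameter :: "'a set \<Rightarrow> ('a \<Rightarrow> 'a \<Rightarrow> bool) \<Rightarrow> nat" where
  "diameter V E = Max {gdist V E u v | u v. u \<in> V \<and> v \<in> V}"

definition open_nbhd :: "'a set \<Rightarrow> ('a \<Rightarrow> 'a \<Rightarrow> bool) \<Rightarrow> 'a \<Rightarrow> 'a set" where
  "open_nbhd V E v = {w \<in> V. E v w}"

definition active_nbhd :: "'a set \<Rightarrow> ('a \<Rightarrow> 'a \<Rightarrow> bool) \<Rightarrow> ('a \<Rightarrow> nat) \<Rightarrow> 'a \<Rightarrow> 'a set" where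
  "active_nbhd V E h v = {w \<in> open_nbhd V E v. h w \<ge> 1}"

definition is_3RDF :: "'a set \<Rightarrow> ('a \<Rightarrow> 'a \<Rightarrow> bool) \<Rightarrow> ('a \<Rightarrow> nat) \<Rightarrow> bool" where
  "is_3RDF V E h \<longleftrightarrow> h \<in> V \<rightarrow>\<^sub>E {0..4} \<and>
     (\<forall>v\<in>V. h v < 3 \<longrightarrow>
        h v + sum h (active_nbhd V E h v) \<ge> card (active_nbhd V E h v) + 3)"

definition triple_roman_domination_number :: "'a set \<Rightarrow> ('a \<Rightarrow> 'a \<Rightarrow> bool) \<Rightarrow> nat" where
  "triple_roman_domination_number V E = (LEAST w. \<exists>h. is_3RDF V E h \<and> sum h V = w)"

end

theory Submission
  imports Defs
begin

lemma count_mod3: "(\<Sum>i<d. (if i mod 3 = (1::nat) then 4 else 0::nat)) = 4 * ((d+1) div 3)"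
proof (induction d)
  case 0 then show ?case by simp
next
  case (Suc d)
  have "(Suc d + 1) div 3 = (d+1) div 3 + (if d mod 3 = 1 then 1 else 0)" by presburger
  then show ?case using Suc by simp
qed

lemma walk_shortcut:
  assumes w: "f 0 = u" "f n = v" "\<forall>i\<le>n. f i \<in> V" "\<forall>i<n. E (f i) (f (Suc i))"
    and ij: "i < j" "j \<le> n" "f i = f j"
  shows "walk V E u v (n - (j - i))"
proof -
  define g where "g k = (if k \<le> i then f k else f (k + (j - i)))" for k
  have "g 0 = u" using w by (simp add: g_def)
  moreover have "g (n - (j - i)) = v"
  proof (cases "j = n")
    case True then show ?thesis using w ij by (auto simp: g_def)
  next
    case False
    hence "\<not> n - (j - i) \<le> i" "n - (j - i) + (j - i) = n" using ij by auto
    then show ?thesis using w by (simp add: g_def)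
  qed
  moreover have "\<forall>k\<le>n - (j - i). g k \<in> V" using w ij by (auto simp: g_def)
  moreover have "\<forall>k<n - (j - i). E (g k) (g (Suc k))"
  proof (intro allI impI)
    fix k assume k: "k < n - (j - i)"
    show "E (g k) (g (Suc k))"
    proof (cases "k < i")
      case True then show ?thesis using w ij k by (auto simp: g_def)
    next
      case False
      show ?thesis
      proof (cases "k = i")
        case True
        then have "g k = f j" "g (Suc k) = f (Suc j)" using ij by (auto simp: g_def)
        moreover have "j < n" using k True ij by linarith
        ultimately show ?thesis using w by simp
      next
        case False
        then have "g k = f (k + (j-i))" "g (Suc k) = f (Suc (k + (j-i)))"
          using \<open>\<not> k < i\<close> by (auto simp: g_def)
        moreover have "k + (j-i) < n" using k ij by linarith
        ultimately show ?thesis using w by simp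
      qed
    qed
  qed
  ultimately show ?thesis unfolding walk_def by blast
qed

theorem proposition23:
  fixes V :: "'a set" and E :: "'a \<Rightarrow> 'a \<Rightarrow> bool"
  assumes "simple_graph V E" and "connected_graph V E" and "card V \<ge> 2"
  shows "real (triple_roman_domination_number V E)
           \<le> 3 * real (card V) - 5 * real (diameter V E) / 3 + 7 / 3"
proof -
  have fin: "finite V" and sym: "\<And>u v. E u v \<Longrightarrow> E v u"
    using assms(1) unfolding simple_graph_def by auto
  have "V \<noteq> {}" using assms(3) by auto
  let ?S = "{gdist V E u v | u v. u \<in> V \<and> v \<in> V}"
  have "?S = (\<lambda>(u,v). gdist V E u v) ` (V \<times> V)" by auto
  hence finS: "finite ?S" using fin by simp
  have "?S \<noteq> {}" using \<open>V \<noteq> {}\<close> by auto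
  hence "diameter V E \<in> ?S" unfolding diameter_def using finS Max_in by blast
  then obtain u v where uv: "u \<in> V" "v \<in> V" "diameter V E = gdist V E u v" by blast
  define d where "d = diameter V E"
  have ex: "\<exists>n. walk V E u v n" using assms(2) uv unfolding connected_graph_def by blast
  have wd: "walk V E u v d" unfolding d_def uv(3) gdist_def by (rule LeastI_ex[OF ex])
  have minl: "\<And>n. walk V E u v n \<Longrightarrow> d \<le> n"
    unfolding d_def uv(3) gdist_def by (rule Least_le)
  obtain f where f: "f 0 = u" "f d = v" "\<forall>i\<le>d. f i \<in> V" "\<forall>i<d. E (f i) (f (Suc i))"
    using wd unfolding walk_def by blast
  have inj: "inj_on f {..d}"
  proof (rule inj_onI, rule ccontr)
    fix i j assume i: "i \<in> {..d}" and j: "j \<in> {..d}" and eq: "f i = f j" and ne: "i \<noteq> j"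
    { fix a b assume "a < b" "b \<le> d" "f a = f b"
      hence "walk V E u v (d - (b - a))" using walk_shortcut[OF f] by blast
      hence "d \<le> d - (b - a)" by (rule minl)
      hence False using \<open>a < b\<close> \<open>b \<le> d\<close> by arith
    }
    then show False using i j eq ne by (metis atMost_iff linorder_neqE_nat)
  qed
  define P where "P = f ` {..d}"
  define Q where "Q = f ` {i. i \<le> d \<and> (i mod 3 = 1 \<or> i = d)}"
  define h where "h x = (if x \<in> V then (if x \<in> P then (if x \<in> Q then 4 else 0) else 3) else (undefined::nat))" for x
  have PV: "P \<subseteq> V" using f unfolding P_def by auto
  have hf: "h (f i) = (if i mod 3 = 1 \<or> i = d then 4 else 0)" if "i \<le> d" for i
  proof -
    have "f i \<in> Q \<longleftrightarrow> (i mod 3 = 1 \<or> i = d)"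
    proof
      assume "f i \<in> Q"
      then obtain k where k: "k \<le> d" "k mod 3 = 1 \<or> k = d" "f i = f k" unfolding Q_def by auto
      hence "i = k" using inj that by (auto dest: inj_onD)
      thus "i mod 3 = 1 \<or> i = d" using k by simp
    qed (use that in \<open>auto simp: Q_def\<close>)
    thus ?thesis using that f unfolding h_def P_def by auto
  qed
  have is3: "is_3RDF V E h"
    unfolding is_3RDF_def
  proof (intro conjI ballI impI)
    show "h \<in> V \<rightarrow>\<^sub>E {0..4}" unfolding h_def by auto
  next
    fix x assume xV: "x \<in> V" and hx: "h x < 3"
    then have "x \<in> P" "x \<notin> Q" by (auto simp: h_def split: if_splits)
    then obtain i where i: "i \<le> d" "x = f i" unfolding P_def by auto
    hence ni: "\<not> (i mod 3 = 1 \<or> i = d)" using \<open>x \<notin> Q\<close> unfolding Q_def by auto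
    have hx0: "h x = 0" using hf[OF i(1)] ni i by simp
    obtain w where w: "w \<in> V" "E x w" "h w = 4"
    proof (cases "i mod 3 = 0")
      case True
      have "i < d" using ni i by auto
      moreover have "Suc i mod 3 = 1" using True by presburger
      ultimately have "i < d" "Suc i mod 3 = 1" by auto
      then have "f (Suc i) \<in> V" "E x (f (Suc i))" "h (f (Suc i)) = 4"
        using f(3,4) hf[of "Suc i"] i(2) by auto
      then show ?thesis by (rule that)
    next
      case False
      hence "i mod 3 = 2" using ni by presburger
      then obtain k where i3: "i = 3 * k + 2" by (metis div_mult_mod_eq mult.commute)
      have ip: "i \<ge> 1" "(i - 1) mod 3 = 1" using i3 by simp_all
      have "i - 1 < d" "Suc (i - 1) = i" using ip i by auto
      hence "E (f (i-1)) (f i)" using f(4) by metis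
      hence "E x (f (i-1))" using i(2) by (simp add: sym)
      moreover have "f (i-1) \<in> V" "h (f (i-1)) = 4"
        using f(3) hf[of "i-1"] i ip by auto
      ultimately have "f (i-1) \<in> V" "E x (f (i-1))" "h (f (i-1)) = 4" by auto
      then show ?thesis by (rule that)
    qed
    let ?A = "active_nbhd V E h x"
    have wA: "w \<in> ?A" using w unfolding active_nbhd_def open_nbhd_def by simp
    have "?A \<subseteq> V" unfolding active_nbhd_def open_nbhd_def by blast
    hence finA: "finite ?A" using fin by (rule finite_subset)
    have ge1: "\<And>y. y \<in> ?A \<Longrightarrow> 1 \<le> h y" unfolding active_nbhd_def by auto
    have "sum h ?A = h w + sum h (?A - {w})" using finA wA by (simp add: sum.remove)
    moreover have "sum h (?A - {w}) \<ge> sum (\<lambda>_. 1) (?A - {w})"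
      using ge1 by (intro sum_mono) auto
    moreover have "card ?A = Suc (card (?A - {w}))" using finA wA
      by (metis card_Suc_Diff1)
    ultimately show "card ?A + 3 \<le> h x + sum h ?A" using w(3) hx0 by simp
  qed
  have sumP: "sum h P = 4 * ((d+1) div 3) + 4"
  proof -
    have "sum h P = (\<Sum>i\<le>d. h (f i))" unfolding P_def using inj by (simp add: sum.reindex)
    also have "\<dots> = (\<Sum>i\<le>d. (if i mod 3 = 1 \<or> i = d then 4 else 0))"
      using hf by (intro sum.cong) auto
    also have "\<dots> = (\<Sum>i<d. (if i mod 3 = 1 \<or> i = d then 4 else 0)) + 4"
      by (simp add: lessThan_Suc_atMost[symmetric])
    also have "(\<Sum>i<d. (if i mod 3 = 1 \<or> i = d then 4 else 0)) = (\<Sum>i<d. (if i mod 3 = (1::nat) then 4 else 0::nat))"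
      by (intro sum.cong) auto
    finally show ?thesis using count_mod3 by simp
  qed
  have cardP: "card P = d + 1" unfolding P_def using inj by (simp add: card_image)
  have sumR: "sum h (V - P) = 3 * card (V - P)"
  proof -
    have "sum h (V - P) = sum (\<lambda>_. 3) (V - P)" by (rule sum.cong) (auto simp: h_def)
    thus ?thesis by simp
  qed
  have total: "sum h V = 4 * ((d+1) div 3) + 4 + 3 * (card V - (d+1))"
  proof -
    have "sum h V = sum h (V - P) + sum h P" by (rule sum.subset_diff[OF PV fin])
    moreover have "card (V - P) = card V - card P"
      using PV fin by (intro card_Diff_subset) (auto intro: finite_subset)
    ultimately show ?thesis using sumP sumR cardP by simp
  qed
  have le: "triple_roman_domination_number V E \<le> sum h V"
    unfolding triple_roman_domination_number_def using is3 by (intro Least_le) blast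
  have pd: "d + 1 \<le> card V" using card_mono[OF fin PV] cardP by simp
  have key: "3 * (4 * ((d+1) div 3) + 4 + 3 * (card V - (d+1))) + 5 * d \<le> 9 * card V + 7"
  proof -
    obtain q where q: "q = (d+1) div 3" by blast
    have q3: "3 * q \<le> d+1" unfolding q by simp
    obtain c where c: "card V = c + (d + 1)" using pd le_Suc_ex by (metis add.commute)
    have "card V - (d+1) = c" using c by simp
    thus ?thesis unfolding q[symmetric] using c q3 by simp
  qed
  show ?thesis
  proof -
    have "3 * real (triple_roman_domination_number V E) + 5 * real d \<le> 9 * real (card V) + 7"
    proof -
      have "3 * triple_roman_domination_number V E + 5 * d \<le> 9 * card V + 7"
      proof -
        have "3 * triple_roman_domination_number V E + 5 * d \<le> 3 * sum h V + 5 * d"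
          using le by simp
        thus ?thesis using key unfolding total by (rule le_trans)
      qed
      hence "real (3 * triple_roman_domination_number V E + 5 * d) \<le> real (9 * card V + 7)"
        by (simp only: of_nat_le_iff)
      thus ?thesis by simp
    qed
    thus ?thesis unfolding d_def by simp
  qed
qed

end
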